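(* Let $f_0(1)=f_0(2)=1$ and $f_0(n)=0$ for $n\ge3$. Then for every $m\ge1$ and $1\le k\le n$, $c_m(n,k)$ equals the number of words of length $n-1$ over the alphabet $\{0,1,\ldots,m\}$ which have exactly $k-1$ letters equal to $m$ and in which all zeros are isolated (no two zeros are adjacent). Also, $c_1(n,k)=\binom{k}{n-k}$ for $1\le k\le n$, and for $m>1$ and $\lceil n/2\rceil\ge k\ge1$, \[c_m(n,k)=\sum_{j=\lceil\frac{n}{2}\rceil-k}^{n-k}(m-1)^{j}\binom{j+k-1}{k-1}\binom{j+k}{n-j-k}.\]
   Context: For $m\ge 1$, $f_m$ is the invert transform of $f_{m-1}$, i.e. $f_m(n)=f_{m-1}(n)+\sum_{i=1}^{n-1}f_{m-1}(i)f_m(n-i)$ for $n\ge1$. For $m\ge1$ the numbers $c_m(n,k)$, $0\le k\le n$, are defined by $c_m(0,0)=1$, $c_m(n,0)=0$ for $n\ge1$, and $c_m(n,k)=\sum_{i=1}^{n-k+1}f_{m-1}(i)\,c_m(n-i,k-1)$ for $1\le k\le n$. Words may be empty; $\binom{a}{b}=0$ when $b>a$ or $b<0$. *)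

theory Defs
  imports "HOL-Analysis.Analysis"
begin

text \<open>f_0(1) = f_0(2) = 1, f_0(n) = 0 otherwise; f_m is the invert transform of f_(m-1).
  The value at 0 is an irrelevant convention (set to 0).\<close>
function finv :: "nat \<Rightarrow> nat \<Rightarrow> nat" where
  "finv 0 n = (if n = 1 \<or> n = 2 then 1 else 0)"
| "finv (Suc m) n = (if n = 0 then 0 else
      finv m n + (\<Sum>i\<in>{1..<n}. finv m i * finv (Suc m) (n - i)))"
  by pat_completeness auto
termination
  by (relation "measures [fst, snd]") auto

fun cmat :: "(nat \<Rightarrow> nat) \<Rightarrow> nat \<Rightarrow> nat \<Rightarrow> nat" where
  "cmat f n 0 = (if n = 0 then 1 else 0)"
| "cmat f n (Suc k) = (if Suc k \<le> n then (\<Sum>i\<in>{1..n - k}. f i * cmat f (n - i) k) else 0)"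

definition c :: "nat \<Rightarrow> nat \<Rightarrow> nat \<Rightarrow> nat" where
  "c m n k = cmat (finv (m - 1)) n k"

definition good_words :: "nat \<Rightarrow> nat \<Rightarrow> nat \<Rightarrow> nat list set" where
  "good_words m l j = {w. length w = l \<and> set w \<subseteq> {0..m}
      \<and> length (filter (\<lambda>x. x = m) w) = j
      \<and> (\<forall>i. Suc i < length w \<longrightarrow> \<not> (w ! i = 0 \<and> w ! Suc i = 0))}"

end

theory Submission
  imports Defs "HOL-Computational_Algebra.Formal_Power_Series"
begin
unbundle no vec_syntax
unbundle fps_syntax

definition iso :: "nat list \<Rightarrow> bool" where
  "iso w = (\<forall>i. Suc i < length w \<longrightarrow> \<not> (w ! i = 0 \<and> w ! Suc i = 0))"

lemma iso_Nil[simp]: "iso []" by (simp add: iso_def)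

lemma iso_Cons: "iso (x # w) \<longleftrightarrow> (w \<noteq> [] \<longrightarrow> \<not> (x = 0 \<and> hd w = 0)) \<and> iso w"
proof
  assume a: "iso (x # w)"
  have "w \<noteq> [] \<longrightarrow> \<not> (x = 0 \<and> hd w = 0)"
    using a[unfolded iso_def, rule_format, of 0] by (cases w) auto
  moreover have "iso w" unfolding iso_def
    using a[unfolded iso_def] by (metis Suc_less_eq length_Cons nth_Cons_Suc)
  ultimately show "(w \<noteq> [] \<longrightarrow> \<not> (x = 0 \<and> hd w = 0)) \<and> iso w" by blast
next
  assume a: "(w \<noteq> [] \<longrightarrow> \<not> (x = 0 \<and> hd w = 0)) \<and> iso w"
  show "iso (x # w)" unfolding iso_def
  proof (intro allI impI)
    fix i assume i: "Suc i < length (x # w)"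
    show "\<not> ((x # w) ! i = 0 \<and> (x # w) ! Suc i = 0)"
    proof (cases i)
      case 0 then show ?thesis using a i by (cases w) auto
    next
      case (Suc i') then show ?thesis using a i unfolding iso_def by auto
    qed
  qed
qed

lemma iso_append_nz: "a \<noteq> 0 \<Longrightarrow> iso (p @ a # s) \<longleftrightarrow> iso p \<and> iso s"
proof (induction p)
  case Nil then show ?case by (simp add: iso_Cons)
next
  case (Cons x p) then show ?case by (cases p) (auto simp: iso_Cons)
qed

lemma first_unique: "m \<notin> set p \<Longrightarrow> m \<notin> set p' \<Longrightarrow> p @ m # s = p' @ m # s' \<Longrightarrow> p = p' \<and> s = s'"
proof (induction p arbitrary: p')
  case Nil then show ?case by (cases p') auto
next
  case (Cons x p) then show ?case by (cases p') auto
qed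

definition gwP :: "nat \<Rightarrow> nat \<Rightarrow> (nat \<Rightarrow> bool) \<Rightarrow> nat list set" where
  "gwP m l P = {w. length w = l \<and> set w \<subseteq> {0..m} \<and> P (length (filter (\<lambda>x. x = m) w)) \<and> iso w}"

lemma gw_gwP: "good_words m l j = gwP m l (\<lambda>c. c = j)"
  by (auto simp: good_words_def gwP_def iso_def)

lemma gwP_finite: "finite (gwP m l P)"
  by (rule finite_subset[OF _ finite_lists_length_eq[OF finite_atLeastAtMost[of 0 m], of l]])
     (auto simp: gwP_def)

lemma gw_finite: "finite (good_words m l j)"
  by (simp add: gw_gwP gwP_finite)

lemma gw_empty: assumes "l < j" shows "good_words m l j = {}"
proof -
  have "j \<le> l" if "w \<in> good_words m l j" for w
    using that length_filter_le[of "\<lambda>x. x = m" w] by (auto simp: good_words_def)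
  then show ?thesis using assms by fastforce
qed

lemma nom_cnt: "m \<notin> set w \<Longrightarrow> length (filter (\<lambda>x. x = m) w) = 0"
  unfolding length_0_conv filter_empty_conv by blast

lemma set_Suc: "(set w \<subseteq> {0..Suc m} \<and> (\<forall>x\<in>set w. x \<noteq> Suc m)) \<longleftrightarrow> set w \<subseteq> {0..m}"
  by (auto simp: subset_iff le_Suc_eq)

lemma gw0_nom: "w \<in> good_words m l 0 \<Longrightarrow> m \<notin> set w"
  by (auto simp: good_words_def filter_empty_conv)

lemma decomp_set:
  assumes m: "0 < m"
  shows "{w \<in> gwP m l P. m \<in> set w} =
    (\<Union>i\<in>{1..l}. (\<lambda>(p, s). p @ m # s) ` (good_words m (i - 1) 0 \<times> gwP m (l - i) (\<lambda>c. P (Suc c))))"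
  (is "?L = ?R")
proof
  have nz: "m \<noteq> 0" using m by simp
  show "?L \<subseteq> ?R"
  proof
    fix w assume w: "w \<in> ?L"
    then have wm: "m \<in> set w" and wl: "length w = l" and ws: "set w \<subseteq> {0..m}"
      and wP: "P (length (filter (\<lambda>x. x = m) w))" and wi: "iso w"
      unfolding gwP_def by blast+
    obtain p s where ps: "w = p @ m # s" "m \<notin> set p"
      using split_list_first[OF wm] by blast
    have pc: "length (filter (\<lambda>x. x = m) p) = 0" using nom_cnt[OF ps(2)] .
    have cnt: "length (filter (\<lambda>x. x = m) w) = Suc (length (filter (\<lambda>x. x = m) s))"
      using pc unfolding ps(1) by simp
    have isos: "iso p" "iso s" using wi iso_append_nz[OF nz] unfolding ps(1) by blast+
    have sets: "set p \<subseteq> {0..m}" "set s \<subseteq> {0..m}" using ws unfolding ps(1) by auto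
    have len: "length w = length p + Suc (length s)" unfolding ps(1) by simp
    have pg: "p \<in> good_words m (Suc (length p) - 1) 0"
      using isos sets pc unfolding good_words_def iso_def by simp
    have sg: "s \<in> gwP m (l - Suc (length p)) (\<lambda>c. P (Suc c))"
      using isos sets wP cnt len wl unfolding gwP_def by simp
    have il: "Suc (length p) \<in> {1..l}" using len wl by simp
    have "w \<in> (\<lambda>(p, s). p @ m # s) ` (good_words m (Suc (length p) - 1) 0 \<times> gwP m (l - Suc (length p)) (\<lambda>c. P (Suc c)))"
      by (rule image_eqI[where x="(p, s)"]) (use ps(1) pg sg in simp_all)
    then show "w \<in> ?R" by (rule UN_I[OF il])
  qed
next
  show "?R \<subseteq> ?L"
  proof
    fix w assume "w \<in> ?R"
    then obtain i where i: "i \<in> {1..l}" and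
      wi: "w \<in> (\<lambda>(p, s). p @ m # s) ` (good_words m (i - 1) 0 \<times> gwP m (l - i) (\<lambda>c. P (Suc c)))"
      by (rule UN_E)
    from wi obtain ps where ps: "ps \<in> good_words m (i - 1) 0 \<times> gwP m (l - i) (\<lambda>c. P (Suc c))"
      and wps: "w = (\<lambda>(p, s). p @ m # s) ps" by (rule imageE)
    obtain p s where pse: "ps = (p, s)" by (cases ps)
    have w: "w = p @ m # s" and p: "p \<in> good_words m (i - 1) 0" and s: "s \<in> gwP m (l - i) (\<lambda>c. P (Suc c))"
      using wps ps unfolding pse by simp_all
    have nz: "m \<noteq> 0" using m by simp
    have pm: "m \<notin> set p" using gw0_nom[OF p] .
    have pc: "length (filter (\<lambda>x. x = m) p) = 0" using nom_cnt[OF pm] .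
    have cnt: "length (filter (\<lambda>x. x = m) w) = Suc (length (filter (\<lambda>x. x = m) s))"
      using pc unfolding w by simp
    have pp: "length p = i - 1" "set p \<subseteq> {0..m}" "iso p"
      using p unfolding good_words_def iso_def by blast+
    have ss: "length s = l - i" "set s \<subseteq> {0..m}" "iso s" "P (Suc (length (filter (\<lambda>x. x = m) s)))"
      using s unfolding gwP_def by blast+
    have "iso w" using pp(3) ss(3) iso_append_nz[OF nz] unfolding w by blast
    moreover have "length w = l" using pp(1) ss(1) i unfolding w by simp
    moreover have "set w \<subseteq> {0..m}" using pp(2) ss(2) unfolding w by simp
    moreover have "m \<in> set w" unfolding w by simp
    ultimately show "w \<in> ?L" using cnt ss(4) unfolding gwP_def by simp
  qed
qed

lemma decomp_card:
  assumes m: "0 < m"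
  shows "card {w \<in> gwP m l P. m \<in> set w} =
    (\<Sum>i\<in>{1..l}. card (good_words m (i - 1) 0) * card (gwP m (l - i) (\<lambda>c. P (Suc c))))"
proof -
  let ?f = "\<lambda>(p, s). p @ m # s :: nat list"
  let ?A = "\<lambda>i. good_words m (i - 1) 0 \<times> gwP m (l - i) (\<lambda>c. P (Suc c))"
  have inj: "inj_on ?f (?A i)" for i
  proof (rule inj_onI)
    fix x y assume x: "x \<in> ?A i" and y: "y \<in> ?A i" and e: "?f x = ?f y"
    obtain p s where xe: "x = (p, s)" by (cases x)
    obtain p' s' where ye: "y = (p', s')" by (cases y)
    have "m \<notin> set p" "m \<notin> set p'" using x y gw0_nom unfolding xe ye by auto
    moreover have "p @ m # s = p' @ m # s'" using e unfolding xe ye by simp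
    ultimately have "p = p' \<and> s = s'" by (rule first_unique)
    then show "x = y" unfolding xe ye by simp
  qed
  have disj: "?f ` ?A i \<inter> ?f ` ?A j = {}" if i: "i \<in> {1..l}" and j: "j \<in> {1..l}" and ij: "i \<noteq> j" for i j
  proof (rule ccontr)
    assume "?f ` ?A i \<inter> ?f ` ?A j \<noteq> {}"
    then obtain w where w1: "w \<in> ?f ` ?A i" and w2: "w \<in> ?f ` ?A j" by blast
    from w1 obtain x where x: "x \<in> ?A i" and wx: "w = ?f x" by (rule imageE)
    from w2 obtain y where y: "y \<in> ?A j" and wy: "w = ?f y" by (rule imageE)
    obtain p s where xe: "x = (p, s)" by (cases x)
    obtain p' s' where ye: "y = (p', s')" by (cases y)
    have pi: "p \<in> good_words m (i - 1) 0" and pj: "p' \<in> good_words m (j - 1) 0"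
      using x y unfolding xe ye by auto
    have "m \<notin> set p" "m \<notin> set p'" using gw0_nom[OF pi] gw0_nom[OF pj] .
    moreover have "p @ m # s = p' @ m # s'" using wx wy unfolding xe ye by simp
    ultimately have "p = p' \<and> s = s'" by (rule first_unique)
    moreover have "length p = i - 1" "length p' = j - 1" using pi pj unfolding good_words_def by auto
    ultimately show False using i j ij by auto
  qed
  have "card {w \<in> gwP m l P. m \<in> set w} = card (\<Union>i\<in>{1..l}. ?f ` ?A i)"
    by (simp only: decomp_set[OF m])
  also have "\<dots> = (\<Sum>i\<in>{1..l}. card (?f ` ?A i))"
  proof (rule card_UN_disjoint)
    show "finite {1..l}" by simp
    show "\<forall>i\<in>{1..l}. finite (?f ` ?A i)"
      using gw_finite gwP_finite by blast
    show "\<forall>i\<in>{1..l}. \<forall>j\<in>{1..l}. i \<noteq> j \<longrightarrow> ?f ` ?A i \<inter> ?f ` ?A j = {}"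
      using disj by blast
  qed
  also have "\<dots> = (\<Sum>i\<in>{1..l}. card (?A i))"
    by (rule sum.cong) (simp_all only: card_image[OF inj])
  finally show ?thesis by (simp only: card_cartesian_product)
qed

lemma W1:
  assumes m: "0 < m"
  shows "card (good_words m l (Suc j)) =
    (\<Sum>i\<in>{1..l}. card (good_words m (i - 1) 0) * card (good_words m (l - i) j))"
proof -
  have "good_words m l (Suc j) = {w \<in> gwP m l (\<lambda>c. c = Suc j). m \<in> set w}"
    using nom_cnt by (fastforce simp: gw_gwP gwP_def)
  then show ?thesis using decomp_card[OF m, of l "\<lambda>c. c = Suc j"] by (simp add: gw_gwP)
qed

lemma W2:
  assumes m: "0 < m"
  shows "card (good_words (Suc m) l 0) = card (good_words m l 0) +
    (\<Sum>i\<in>{1..l}. card (good_words m (i - 1) 0) * card (good_words (Suc m) (l - i) 0))"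
proof -
  have e: "good_words (Suc m) l 0 = gwP m l (\<lambda>_. True)" for l
    unfolding good_words_def gwP_def iso_def length_0_conv filter_empty_conv
    using set_Suc[of _ m] by auto
  have "gwP m l (\<lambda>_. True) = good_words m l 0 \<union> {w \<in> gwP m l (\<lambda>_. True). m \<in> set w}"
    using nom_cnt by (auto simp: gwP_def good_words_def iso_def filter_empty_conv)
  moreover have "good_words m l 0 \<inter> {w \<in> gwP m l (\<lambda>_. True). m \<in> set w} = {}"
    using gw0_nom by blast
  ultimately have "card (gwP m l (\<lambda>_. True)) = card (good_words m l 0) + card {w \<in> gwP m l (\<lambda>_. True). m \<in> set w}"
    by (metis (no_types, lifting) card_Un_disjoint gwP_finite gw_finite finite_Un)
  then show ?thesis using decomp_card[OF m, of l "\<lambda>_. True"] e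
    by simp
qed

lemma gw1_0: "good_words (Suc 0) l 0 = (if l \<le> 1 then {replicate l 0} else {})"
proof -
  have a: "w = replicate l 0" if "w \<in> good_words (Suc 0) l 0" for w
  proof -
    have "set w \<subseteq> {0..Suc 0} \<and> (\<forall>x\<in>set w. x \<noteq> Suc 0)"
      using that unfolding good_words_def length_0_conv filter_empty_conv by auto
    then have "set w \<subseteq> {0..0}" using set_Suc[of w 0] by blast
    then have "\<forall>y\<in>set w. y = 0" by auto
    then show ?thesis using that replicate_length_same[of w 0] by (simp add: good_words_def)
  qed
  have b: "replicate l 0 \<in> good_words (Suc 0) l 0 \<longleftrightarrow> l \<le> 1"
  proof
    assume "replicate l 0 \<in> good_words (Suc 0) l 0"
    then have "\<forall>i. Suc i < l \<longrightarrow> False" by (auto simp: good_words_def)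
    then show "l \<le> 1" by (cases l) auto
  next
    assume "l \<le> 1"
    then show "replicate l 0 \<in> good_words (Suc 0) l 0"
      by (auto simp: good_words_def filter_empty_conv)
  qed
  show ?thesis using a b by auto
qed

lemma finv_words: "1 \<le> n \<Longrightarrow> finv m n = card (good_words (Suc m) (n - 1) 0)"
proof (induction m arbitrary: n)
  case 0
  then show ?case by (auto simp: gw1_0)
next
  case (Suc m)
  show ?case using Suc.prems
  proof (induction n rule: less_induct)
    case (less n)
    have "finv (Suc m) n = finv m n + (\<Sum>i\<in>{1..<n}. finv m i * finv (Suc m) (n - i))"
      using less.prems by simp
    also have "\<dots> = card (good_words (Suc m) (n - 1) 0) +
        (\<Sum>i\<in>{1..n-1}. card (good_words (Suc m) (i - 1) 0) * card (good_words (Suc (Suc m)) (n - 1 - i) 0))"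
    proof -
      have "{1..<n} = {1..n-1}" using less.prems by auto
      moreover have "finv m i * finv (Suc m) (n - i) = card (good_words (Suc m) (i - 1) 0) * card (good_words (Suc (Suc m)) (n - 1 - i) 0)"
        if "i \<in> {1..n-1}" for i
      proof -
        have i: "1 \<le> i" "i \<le> n - 1" using that by auto
        have h: "finv (Suc m) (n - i) = card (good_words (Suc (Suc m)) (n - i - 1) 0)"
          by (rule less.IH) (use i in auto)
        have "finv m i = card (good_words (Suc m) (i - 1) 0)" by (rule Suc.IH) (use i in auto)
        then show ?thesis using h by (metis diff_commute)
      qed
      ultimately show ?thesis using Suc.IH[of n] less.prems by simp
    qed
    also have "\<dots> = card (good_words (Suc (Suc m)) (n - 1) 0)"
      by (rule W2[symmetric]) simp
    finally show ?case .
  qed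
qed

lemma part1: "0 < m \<Longrightarrow> 1 \<le> n \<Longrightarrow> cmat (finv (m - 1)) n (Suc j) = card (good_words m (n - 1) j)"
proof (induction j arbitrary: n)
  case 0
  have "(\<Sum>i\<in>{1..n}. finv (m - 1) i * cmat (finv (m - 1)) (n - i) 0) = (\<Sum>i\<in>{1..n}. if i = n then finv (m - 1) n else 0)"
    by (rule sum.cong) auto
  then have "cmat (finv (m - 1)) n (Suc 0) = (\<Sum>i\<in>{1..n}. if i = n then finv (m - 1) n else 0)"
    using 0 by simp
  also have "\<dots> = finv (m - 1) n" using 0 by simp
  also have "\<dots> = card (good_words m (n - 1) 0)" using finv_words[of n "m - 1"] 0 by simp
  finally show ?case .
next
  case (Suc j)
  show ?case
  proof (cases "Suc (Suc j) \<le> n")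
    case True
    have "cmat (finv (m - 1)) n (Suc (Suc j)) = (\<Sum>i\<in>{1..n - Suc j}. finv (m - 1) i * cmat (finv (m - 1)) (n - i) (Suc j))"
      using True by simp
    also have "\<dots> = (\<Sum>i\<in>{1..n - Suc j}. card (good_words m (i - 1) 0) * card (good_words m (n - 1 - i) j))"
    proof (rule sum.cong)
      fix i assume i: "i \<in> {1..n - Suc j}"
      have f: "finv (m - 1) i = card (good_words m (i - 1) 0)"
        using finv_words[of i "m - 1"] i Suc.prems by simp
      have "cmat (finv (m - 1)) (n - i) (Suc j) = card (good_words m (n - i - 1) j)"
        by (rule Suc.IH) (use i Suc.prems in auto)
      then show "finv (m - 1) i * cmat (finv (m - 1)) (n - i) (Suc j) = card (good_words m (i - 1) 0) * card (good_words m (n - 1 - i) j)"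
        using f by (metis diff_commute)
    qed simp
    also have "\<dots> = (\<Sum>i\<in>{1..n - 1}. card (good_words m (i - 1) 0) * card (good_words m (n - 1 - i) j))"
      by (rule sum.mono_neutral_left) (auto simp: gw_empty)
    also have "\<dots> = card (good_words m (n - 1) (Suc j))"
      by (rule W1[symmetric]) (use Suc in simp)
    finally show ?thesis .
  next
    case False
    then show ?thesis by (simp add: gw_empty)
  qed
qed


lemma finv_0[simp]: "finv m 0 = 0"
  by (cases m) auto

definition PP :: "int fps" where "PP = fps_X + fps_X^2"

definition Ff :: "nat \<Rightarrow> int fps" where "Ff m = Abs_fps (\<lambda>n. int (finv m n))"

lemma PP_nth: "PP $ n = (if n = 1 \<or> n = 2 then 1 else 0)"
  by (auto simp: PP_def)

lemma PP_0[simp]: "PP $ 0 = 0" by (simp add: PP_nth)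

lemma Ff0: "Ff 0 = PP"
  by (rule fps_ext) (simp add: Ff_def PP_nth)

lemma Ff_rec: "Ff (Suc m) = Ff m + Ff m * Ff (Suc m)"
proof (rule fps_ext)
  fix n
  show "Ff (Suc m) $ n = (Ff m + Ff m * Ff (Suc m)) $ n"
  proof (cases "n = 0")
    case True then show ?thesis by (simp add: Ff_def)
  next
    case False
    have "{0..n} = insert 0 (insert n {1..<n})" using False by auto
    then have "(Ff m * Ff (Suc m)) $ n = (\<Sum>i\<in>{1..<n}. Ff m $ i * Ff (Suc m) $ (n - i))"
      using False by (simp add: fps_mult_nth Ff_def)
    then show ?thesis using False by (simp add: Ff_def)
  qed
qed

lemma Ff_eq: "Ff m * (1 - fps_const (int m) * PP) = PP"
proof (induction m)
  case 0 then show ?case by (simp add: Ff0)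
next
  case (Suc m)
  define A where "A = Ff m"
  define B where "B = Ff (Suc m)"
  define Q where "Q = 1 - fps_const (int m) * PP"
  have AQ: "A * Q = PP" using Suc by (simp add: A_def Q_def)
  have BA: "B - A * B = A" using Ff_rec[of m] unfolding A_def B_def by (metis add_diff_cancel_right')
  have e0: "fps_const (int (Suc m)) = fps_const (int m) + 1"
    by (simp flip: fps_const_1_eq_1 add: fps_const_add)
  have e: "fps_const (int (Suc m)) * PP = fps_const (int m) * PP + PP"
    by (metis e0 distrib_right mult_1_left)
  have "B * (1 - fps_const (int (Suc m)) * PP) = B * Q - B * PP"
    by (simp only: e Q_def) (simp add: algebra_simps)
  also have "\<dots> = B * Q - B * (A * Q)" using AQ by simp
  also have "\<dots> = Q * (B - A * B)" by (simp add: algebra_simps)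
  also have "\<dots> = PP" using BA AQ by (simp add: mult.commute)
  finally show ?case by (simp add: B_def)
qed

lemma cmat_zero: "n < k \<Longrightarrow> cmat f n k = 0"
  by (cases k) auto

lemma cmat_fps:
  assumes f0: "f 0 = 0"
  shows "(Abs_fps (\<lambda>n. int (f n)))^k $ n = int (cmat f n k)"
proof (induction k arbitrary: n)
  case 0 then show ?case by simp
next
  case (Suc k)
  define F where "F = Abs_fps (\<lambda>n. int (f n))"
  have "F ^ Suc k $ n = (\<Sum>i=0..n. int (f i) * int (cmat f (n - i) k))"
    using Suc by (simp add: F_def fps_mult_nth)
  also have "\<dots> = (\<Sum>i\<in>{1..n-k}. int (f i) * int (cmat f (n - i) k))"
    by (rule sum.mono_neutral_right) (use f0 in \<open>auto simp: cmat_zero not_le Suc_le_eq\<close>)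
  also have "\<dots> = int (cmat f n (Suc k))"
    by (cases "Suc k \<le> n") (auto simp: of_nat_sum)
  finally show ?case by (simp add: F_def)
qed

lemma binom_fps: "((1 + fps_X :: int fps) ^ r) $ i = int (r choose i)"
proof (induction r arbitrary: i)
  case 0 then show ?case by simp
next
  case (Suc r)
  have "(1 + fps_X :: int fps) ^ Suc r = (1 + fps_X) ^ r + fps_X * (1 + fps_X) ^ r"
    by (simp add: algebra_simps)
  then show ?case using Suc by (cases i) (simp_all add: distrib_right)
qed

lemma PP_pow_nth: "(PP ^ r) $ n = (if r \<le> n then int (r choose (n - r)) else 0)"
proof -
  have "PP ^ r = fps_X ^ r * (1 + fps_X) ^ r"
    by (simp add: PP_def power2_eq_square algebra_simps flip: power_mult_distrib)
  then show ?thesis by (simp add: fps_X_power_mult_nth binom_fps)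
qed


definition EE :: "nat \<Rightarrow> nat \<Rightarrow> int fps" where
  "EE a k = Abs_fps (\<lambda>j. int (a ^ j * ((j + k - 1) choose j)))"

lemma EE0: "EE a 0 = 1"
  by (rule fps_ext) (simp add: EE_def)

lemma EE_Suc: "EE a (Suc k) = EE a 1 * EE a k"
proof (cases k)
  case 0 then show ?thesis by (simp add: EE0)
next
  case (Suc r)
  show ?thesis
  proof (rule fps_ext)
    fix j
    have "(EE a 1 * EE a k) $ j = (\<Sum>i=0..j. int (a ^ j) * int ((j - i + k - 1) choose (j - i)))"
      by (auto simp: EE_def fps_mult_nth power_add[symmetric] intro!: sum.cong)
    also have "\<dots> = int (a ^ j) * (\<Sum>i=0..j. int ((j - i + k - 1) choose (j - i)))"
      by (simp add: sum_distrib_left)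
    also have "(\<Sum>i=0..j. int ((j - i + k - 1) choose (j - i))) = (\<Sum>i=0..j. int ((i + k - 1) choose i))"
      by (subst sum.atLeastAtMost_rev) simp
    also have "\<dots> = int (\<Sum>i\<le>j. (r + i) choose i)"
      by (simp add: of_nat_sum Suc atLeast0AtMost add.commute)
    also have "(\<Sum>i\<le>j. (r + i) choose i) = (j + Suc k - 1) choose j"
      using sum_choose_lower[of r j] by (simp add: Suc add.commute)
    finally show "EE a (Suc k) $ j = (EE a 1 * EE a k) $ j"
      by (simp add: EE_def)
  qed
qed

lemma EE_pow: "EE a k = EE a 1 ^ k"
  by (induction k) (simp_all add: EE0 EE_Suc del: One_nat_def)

lemma EE1_inv: "EE a 1 * (1 - fps_const (int a) * fps_X) = 1"
proof (rule fps_ext)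
  fix n
  have "EE a 1 * (1 - fps_const (int a) * fps_X) = EE a 1 - fps_const (int a) * (fps_X * EE a 1)"
    by (simp add: algebra_simps)
  then show "(EE a 1 * (1 - fps_const (int a) * fps_X)) $ n = 1 $ n"
    by (cases n) (simp_all add: EE_def)
qed

definition HH :: "nat \<Rightarrow> nat \<Rightarrow> int fps" where
  "HH a k = (fps_X ^ k * EE a k) oo PP"

lemma HH_pow: "HH a k = HH a 1 ^ k"
proof -
  have "fps_X ^ k * EE a k = (fps_X * EE a 1) ^ k"
    by (subst EE_pow) (simp add: power_mult_distrib)
  then have "HH a k = (fps_X * EE a 1) ^ k oo PP" by (simp add: HH_def)
  also have "\<dots> = ((fps_X * EE a 1) oo PP) ^ k"
    by (rule fps_compose_power[symmetric]) simp
  finally show ?thesis by (simp add: HH_def)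
qed

lemma HH1_eq: "HH a 1 * (1 - fps_const (int a) * PP) = PP"
proof -
  have "1 - fps_const (int a) * PP = (1 - fps_const (int a) * fps_X) oo PP"
    by (simp add: fps_compose_sub_distrib fps_compose_mult_distrib)
  then have "HH a 1 * (1 - fps_const (int a) * PP)
      = ((fps_X * EE a 1) * (1 - fps_const (int a) * fps_X)) oo PP"
    by (simp add: HH_def fps_compose_mult_distrib)
  also have "(fps_X * EE a 1) * (1 - fps_const (int a) * fps_X) = fps_X"
    using EE1_inv[of a] by (simp add: mult.assoc)
  finally show ?thesis by simp
qed

lemma Ff_HH: "Ff a = HH a 1"
proof -
  have ne: "1 - fps_const (int a) * PP \<noteq> 0"
  proof
    assume "1 - fps_const (int a) * PP = 0"
    then have "(1 - fps_const (int a) * PP) $ 0 = 0" by simp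
    then show False by simp
  qed
  have "Ff a * (1 - fps_const (int a) * PP) = HH a 1 * (1 - fps_const (int a) * PP)"
    using Ff_eq HH1_eq by simp
  then show ?thesis using ne by simp
qed

lemma cmat_closed:
  assumes "1 \<le> k" "k \<le> n"
  shows "int (cmat (finv a) n k) =
    (\<Sum>j=0..n-k. int (a ^ j * ((j + k - 1) choose (k - 1)) * ((j + k) choose (n - j - k))))"
proof -
  have "int (cmat (finv a) n k) = (Ff a ^ k) $ n"
    by (simp add: Ff_def cmat_fps)
  also have "\<dots> = HH a k $ n" by (simp only: Ff_HH HH_pow[of a k, symmetric])
  also have "\<dots> = (\<Sum>i=0..n. (if i < k then 0 else EE a k $ (i - k)) * (PP ^ i $ n))"
    by (simp add: HH_def fps_compose_nth fps_X_power_mult_nth)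
  also have "\<dots> = (\<Sum>i=k..n. EE a k $ (i - k) * (PP ^ i $ n))"
    by (rule sum.mono_neutral_cong_right) (use assms in auto)
  also have "\<dots> = (\<Sum>j=0..n-k. EE a k $ j * (PP ^ (j + k) $ n))"
    using sum.shift_bounds_cl_nat_ivl[of "\<lambda>i. EE a k $ (i - k) * (PP ^ i $ n)" 0 k "n - k"] assms
    by simp
  also have "\<dots> = (\<Sum>j=0..n-k. int (a ^ j * ((j + k - 1) choose (k - 1)) * ((j + k) choose (n - j - k))))"
  proof (rule sum.cong)
    fix j assume j: "j \<in> {0..n-k}"
    have "(j + k - 1) choose j = (j + k - 1) choose (k - 1)"
      using assms by (subst binomial_symmetric) auto
    then show "EE a k $ j * (PP ^ (j + k) $ n) = int (a ^ j * ((j + k - 1) choose (k - 1)) * ((j + k) choose (n - j - k)))"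
      using j assms by (simp add: EE_def PP_pow_nth diff_diff_left)
  qed simp
  finally show ?thesis .
qed


lemma ceil_half: "\<lceil>real n / 2\<rceil> = int ((n + 1) div 2)"
proof (rule ceiling_unique)
  show "real_of_int (int ((n + 1) div 2)) - 1 < real n / 2"
    by (cases "even n") (auto elim!: evenE oddE simp: field_simps)
  show "real n / 2 \<le> real_of_int (int ((n + 1) div 2))"
    by (cases "even n") (auto elim!: evenE oddE simp: field_simps)
qed

theorem corollary20:
  shows "(\<forall>m n k. 1 \<le> m \<longrightarrow> 1 \<le> k \<longrightarrow> k \<le> n \<longrightarrow>
            c m n k = card (good_words m (n - 1) (k - 1)))
       \<and> (\<forall>n k. 1 \<le> k \<longrightarrow> k \<le> n \<longrightarrow> c 1 n k = k choose (n - k))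
       \<and> (\<forall>m n k. 1 < m \<longrightarrow> 1 \<le> k \<longrightarrow> int k \<le> \<lceil>real n / 2\<rceil> \<longrightarrow>
            c m n k = (\<Sum>j \<in> {nat (\<lceil>real n / 2\<rceil> - int k)..n - k}.
               (m - 1) ^ j * ((j + k - 1) choose (k - 1)) * ((j + k) choose (n - j - k))))"
proof (intro conjI allI impI)
  fix m n k :: nat
  assume "1 \<le> m" "1 \<le> k" "k \<le> n"
  then show "c m n k = card (good_words m (n - 1) (k - 1))"
    using part1[of m n "k - 1"] by (simp add: c_def)
next
  fix n k :: nat
  assume k: "1 \<le> k" "k \<le> n"
  have "int (c 1 n k) = int (cmat (finv 0) n k)"
    by (simp add: c_def)
  also have "\<dots> = (Ff 0 ^ k) $ n"
    unfolding Ff_def by (rule cmat_fps[symmetric]) simp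
  also have "\<dots> = int (k choose (n - k))"
    using k by (simp add: Ff0 PP_pow_nth)
  finally show "c 1 n k = k choose (n - k)" by simp
next
  fix m n k :: nat
  assume m: "1 < m" and k: "1 \<le> k" and kn: "int k \<le> \<lceil>real n / 2\<rceil>"
  define lo where "lo = (n + 1) div 2 - k"
  have kn': "k \<le> (n + 1) div 2" using kn by (simp add: ceil_half)
  then have kn2: "k \<le> n" by linarith
  have lo: "nat (\<lceil>real n / 2\<rceil> - int k) = lo" by (simp add: ceil_half lo_def)
  have "int (c m n k) = (\<Sum>j=0..n-k. int ((m - 1) ^ j * ((j + k - 1) choose (k - 1)) * ((j + k) choose (n - j - k))))"
    using cmat_closed[OF k kn2, of "m - 1"] by (simp add: c_def)
  also have "\<dots> = (\<Sum>j=lo..n-k. int ((m - 1) ^ j * ((j + k - 1) choose (k - 1)) * ((j + k) choose (n - j - k))))"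
  proof (rule sum.mono_neutral_right)
    show "\<forall>j\<in>{0..n - k} - {lo..n - k}. int ((m - 1) ^ j * ((j + k - 1) choose (k - 1)) * ((j + k) choose (n - j - k))) = 0"
    proof
      fix j assume "j \<in> {0..n - k} - {lo..n - k}"
      then have "j < lo" by auto
      then have "j + k < n - j - k" using kn' unfolding lo_def by linarith
      then show "int ((m - 1) ^ j * ((j + k - 1) choose (k - 1)) * ((j + k) choose (n - j - k))) = 0"
        by simp
    qed
  qed auto
  finally have "int (c m n k) = int (\<Sum>j=lo..n-k. (m - 1) ^ j * ((j + k - 1) choose (k - 1)) * ((j + k) choose (n - j - k)))"
    by (simp only: of_nat_sum)
  then show "c m n k = (\<Sum>j \<in> {nat (\<lceil>real n / 2\<rceil> - int k)..n - k}.
               (m - 1) ^ j * ((j + k - 1) choose (k - 1)) * ((j + k) choose (n - j - k)))"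
    by (simp only: lo of_nat_eq_iff)
qed

end
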